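(* Let $\vartheta\in(0,1)$, let $c,r$ be positive integers and $\alpha,\beta$ positive integers, and consider the single-agent trust model described in the context. If $\vartheta< c/(c+r)$, then $p_{\rm quit}=\mathbb{P}(\tau<\infty)=1$, i.e. $\tau<\infty$ almost surely.
   Context: Single-agent trust model: $\vartheta$ is the institution's true trustworthiness; $(X_t)_{t\in\mathbb{N}}$ are i.i.d. with $\mathbb{P}(X_t=1)=\vartheta$, $\mathbb{P}(X_t=0)=1-\vartheta$. The agent has actions $A_t\in\{0,1\}$ and observes $X_t$ only in rounds with $A_t=1$. Let $\hat S_t=\sum_{s=1}^t X_s\mathbf{1}_{\{A_s=1\}}$, $\hat F_t=\sum_{s=1}^t(1-X_s)\mathbf{1}_{\{A_s=1\}}$ (so $\hat S_0=\hat F_0=0$), and $\hat\vartheta_t=\frac{\alpha+\hat S_t}{\alpha+\beta+\hat S_t+\hat F_t}$ (the posterior mean under a Beta$(\alpha,\beta)$ prior). The agent acts myopically: $A_t=1$ if $r\hat\vartheta_n-c(1-\hat\vartheta_n)\ge 0$ for all $n\in\{0,1,\dots,t-1\}$, and $A_t=0$ otherwise. The quitting time is $\tau:=\inf\{t\in\mathbb{N}\cup\{\infty\}: r\hat\vartheta_t-c(1-\hat\vartheta_t)<0\}$ and $p_{\rm quit}:=\mathbb{P}(\tau<\infty)$. *)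

theory Defs
  imports "HOL-Probability.Probability"
begin

text \<open>Posterior mean under a Beta(alpha, beta) prior after S successes and F failures.\<close>
definition post_mean :: "real \<Rightarrow> real \<Rightarrow> real \<Rightarrow> real \<Rightarrow> real" where
  "post_mean \<alpha> \<beta> S F = (\<alpha> + S) / (\<alpha> + \<beta> + S + F)"

definition trusts :: "real \<Rightarrow> real \<Rightarrow> real \<Rightarrow> bool" where
  "trusts r c \<theta> \<longleftrightarrow> r * \<theta> - c * (1 - \<theta>) \<ge> 0"

text \<open>History of observed counts along a sample path x (x s = True means X_s = 1):
  hist ... t = [(S_0,F_0), ..., (S_t,F_t)].  In round t+1 the agent acts
  (A_{t+1} = 1) iff the trust condition holds at every n in {0..t}; only then is
  X_{t+1} observed and added to the counts.\<close>
fun hist :: "real \<Rightarrow> real \<Rightarrow> real \<Rightarrow> real \<Rightarrow> (nat \<Rightarrow> bool) \<Rightarrow> nat \<Rightarrow> (real \<times> real) list" where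
  "hist \<alpha> \<beta> r c x 0 = [(0, 0)]"
| "hist \<alpha> \<beta> r c x (Suc t) =
     (let H = hist \<alpha> \<beta> r c x t;
          A = (\<forall>n < length H. trusts r c (post_mean \<alpha> \<beta> (fst (H ! n)) (snd (H ! n))));
          SF = last H
      in H @ [if A then (fst SF + (if x (Suc t) then 1 else 0), snd SF + (if x (Suc t) then 0 else 1))
              else SF])"

definition theta_hat :: "real \<Rightarrow> real \<Rightarrow> real \<Rightarrow> real \<Rightarrow> (nat \<Rightarrow> bool) \<Rightarrow> nat \<Rightarrow> real" where
  "theta_hat \<alpha> \<beta> r c x t =
     (let SF = hist \<alpha> \<beta> r c x t ! t in post_mean \<alpha> \<beta> (fst SF) (snd SF))"

text \<open>Quitting time tau in N \<union> {\<infinity>} (infimum of the empty set is \<infinity>).\<close>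
definition quit_time :: "real \<Rightarrow> real \<Rightarrow> real \<Rightarrow> real \<Rightarrow> (nat \<Rightarrow> bool) \<Rightarrow> enat" where
  "quit_time \<alpha> \<beta> r c x = Inf {enat t | t. \<not> trusts r c (theta_hat \<alpha> \<beta> r c x t)}"

end

theory Submission
  imports Defs "HOL-Real_Asymp.Real_Asymp"
begin



definition Ssum :: "(nat \<Rightarrow> bool) \<Rightarrow> nat \<Rightarrow> real" where
  "Ssum x t = (\<Sum>s\<in>{1..t}. if x s then 1 else 0)"

definition fSF :: "(nat \<Rightarrow> bool) \<Rightarrow> nat \<Rightarrow> real \<times> real" where
  "fSF x t = (Ssum x t, real t - Ssum x t)"

lemma Ssum_Suc: "Ssum x (Suc t) = Ssum x t + (if x (Suc t) then 1 else 0)"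
  unfolding Ssum_def by (simp add: add.commute)

lemma hist_len: "length (hist a b r c x t) = Suc t"
  by (induction t) (simp_all add: Let_def)

lemma hist_eq:
  "(\<forall>n<t. trusts r c (post_mean a b (fst (fSF x n)) (snd (fSF x n))))
   \<Longrightarrow> hist a b r c x t = map (fSF x) [0..<Suc t]"
proof (induction t)
  case 0
  then show ?case by (simp add: fSF_def Ssum_def)
next
  case (Suc t)
  then have IH: "hist a b r c x t = map (fSF x) [0..<Suc t]" by simp
  have A: "(\<forall>n < length (map (fSF x) [0..<Suc t]). trusts r c (post_mean a b (fst (map (fSF x) [0..<Suc t] ! n)) (snd (map (fSF x) [0..<Suc t] ! n))))"
    using Suc.prems by (simp del: upt_Suc)
  have L: "last (map (fSF x) [0..<Suc t]) = fSF x t" by simp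
  have E: "map (fSF x) [0..<Suc (Suc t)] = map (fSF x) [0..<Suc t] @ [fSF x (Suc t)]" by simp
  have F: "fSF x (Suc t) = (if x (Suc t) then (fst (fSF x t) + 1, snd (fSF x t)) else (fst (fSF x t), snd (fSF x t) + 1))"
    by (simp add: fSF_def Ssum_Suc)
  show ?case
    apply (subst hist.simps)
    unfolding IH Let_def E
    using A L F by (simp del: upt_Suc)
qed

lemma theta_hat_eq:
  "(\<forall>n<t. trusts r c (post_mean a b (fst (fSF x n)) (snd (fSF x n))))
   \<Longrightarrow> theta_hat a b r c x t = post_mean a b (fst (fSF x t)) (snd (fSF x t))"
  unfolding theta_hat_def Let_def using hist_eq[of t r c a b x]
  by (simp del: upt_Suc)

lemma all_trusts_iff:
  "(\<forall>t. trusts r c (theta_hat a b r c x t)) \<longleftrightarrow>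
   (\<forall>t. trusts r c (post_mean a b (fst (fSF x t)) (snd (fSF x t))))"
proof
  assume H: "\<forall>t. trusts r c (theta_hat a b r c x t)"
  show "\<forall>t. trusts r c (post_mean a b (fst (fSF x t)) (snd (fSF x t)))"
  proof
    fix t show "trusts r c (post_mean a b (fst (fSF x t)) (snd (fSF x t)))"
    proof (induction t rule: less_induct)
      case (less t)
      then show ?case using H theta_hat_eq[of t r c a b x] by metis
    qed
  qed
next
  assume H: "\<forall>t. trusts r c (post_mean a b (fst (fSF x t)) (snd (fSF x t)))"
  then show "\<forall>t. trusts r c (theta_hat a b r c x t)" using theta_hat_eq by metis
qed

lemma quit_fin_iff:
  "quit_time a b r c x < \<infinity> \<longleftrightarrow> (\<exists>t. \<not> trusts r c (post_mean a b (fst (fSF x t)) (snd (fSF x t))))"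
proof -
  have "quit_time a b r c x < \<infinity> \<longleftrightarrow> (\<exists>t. \<not> trusts r c (theta_hat a b r c x t))"
  proof
    assume "quit_time a b r c x < \<infinity>"
    then have "{enat t | t. \<not> trusts r c (theta_hat a b r c x t)} \<noteq> {}"
      unfolding quit_time_def by (metis Inf_empty less_irrefl top_enat_def infinity_ennreal_def)
    then show "\<exists>t. \<not> trusts r c (theta_hat a b r c x t)" by auto
  next
    assume "\<exists>t. \<not> trusts r c (theta_hat a b r c x t)"
    then obtain t where "\<not> trusts r c (theta_hat a b r c x t)" by auto
    then have "quit_time a b r c x \<le> enat t" unfolding quit_time_def
      by (intro Inf_lower) auto
    then show "quit_time a b r c x < \<infinity>"
      using enat_ord_simps(4) order_le_less_trans by blast
  qed
  then show ?thesis using all_trusts_iff by blast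
qed


lemma lim_aux: fixes d a :: real assumes "d > 0"
  shows "(\<lambda>n::nat. exp (-2 * (d * real n - a)\<^sup>2 / real n)) \<longlonglongrightarrow> 0"
  using assms by real_asymp

lemma (in prob_space) hoeff_aux:
  fixes Y :: "nat \<Rightarrow> 'a \<Rightarrow> real"
  assumes ind: "indep_vars (\<lambda>_. borel) Y {1..n}"
    and bnd: "\<And>i \<omega>. i \<in> {1..n} \<Longrightarrow> Y i \<omega> \<in> {0..1}"
    and ex: "\<And>i. i \<in> {1..n} \<Longrightarrow> expectation (Y i) = p"
    and n: "n \<ge> 1" and e: "\<epsilon> \<ge> 0"
  shows "prob {\<omega>\<in>space M. (\<Sum>i\<in>{1..n}. Y i \<omega>) \<ge> real n * p + \<epsilon>} \<le> exp (-2 * \<epsilon>\<^sup>2 / real n)"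
proof -
  interpret H: Hoeffding_ineq M "{1..n}" Y "\<lambda>_. 0" "\<lambda>_. 1" "\<Sum>i\<in>{1..n}. expectation (Y i)"
    by unfold_locales (use ind bnd in auto)
  have mu: "(\<Sum>i\<in>{1..n}. expectation (Y i)) = real n * p" using ex by simp
  have "(\<Sum>i\<in>{1..n}. ((\<lambda>_. 1::real) i - (\<lambda>_. 0) i)\<^sup>2) = real n" by simp
  with H.Hoeffding_ineq_ge[OF e] n show ?thesis unfolding mu by simp
qed

theorem lemma3p1:
  fixes M :: "'a measure" and X :: "nat \<Rightarrow> 'a \<Rightarrow> bool"
    and p :: real and c r \<alpha> \<beta> :: nat
  assumes "prob_space M"
    and "\<And>t. t \<ge> 1 \<Longrightarrow> X t \<in> measurable M (count_space UNIV)"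
    and "prob_space.indep_vars M (\<lambda>_. count_space UNIV) X {1..}"
    and "\<And>t. t \<ge> 1 \<Longrightarrow> measure M {\<omega> \<in> space M. X t \<omega>} = p"
    and "0 < p" and "p < 1"
    and "0 < c" and "0 < r" and "0 < \<alpha>" and "0 < \<beta>"
    and "p < real c / (real c + real r)"
  shows "measure M {\<omega> \<in> space M.
           quit_time (real \<alpha>) (real \<beta>) (real r) (real c) (\<lambda>t. X t \<omega>) < \<infinity>} = 1"
proof -
  interpret P: prob_space M by fact
  define q where "q = real c / (real c + real r)"
  define Y where "Y i \<omega> = (if X i \<omega> then 1 else 0 :: real)" for i \<omega>
  have Ymeas: "Y i \<in> borel_measurable M" if "i \<ge> 1" for i
  proof -
    have "(\<lambda>b::bool. if b then 1 else 0 :: real) \<in> measurable (count_space UNIV) borel" by simp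
    from measurable_compose[OF assms(2)[OF that] this]
    have "(\<lambda>\<omega>. if X i \<omega> then 1 else 0 :: real) \<in> borel_measurable M" by (simp add: o_def)
    moreover have "Y i = (\<lambda>\<omega>. if X i \<omega> then 1 else 0 :: real)" by (simp add: fun_eq_iff Y_def)
    ultimately show ?thesis by simp
  qed
  have Xsets: "{\<omega>\<in>space M. X i \<omega>} \<in> sets M" if "i \<ge> 1" for i
  proof -
    have "X i -` {True} \<inter> space M \<in> sets M" by (rule measurable_sets[OF assms(2)[OF that]]) simp
    moreover have "X i -` {True} \<inter> space M = {\<omega>\<in>space M. X i \<omega>}" by auto
    ultimately show ?thesis by simp
  qed
  have ex: "P.expectation (Y i) = p" if "i \<ge> 1" for i
  proof -
    have "P.expectation (Y i) = P.expectation (indicator {\<omega>\<in>space M. X i \<omega>})"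
      by (rule Bochner_Integration.integral_cong) (auto simp: Y_def indicator_def)
    also have "\<dots> = measure M {\<omega>\<in>space M. X i \<omega>}"
      using Xsets[OF that] by (simp add: P.emeasure_space_1)
    finally show ?thesis using assms(4)[OF that] by simp
  qed
  have ind: "P.indep_vars (\<lambda>_. borel) Y {1..n}" for n
  proof -
    have "P.indep_vars (\<lambda>_. borel) (\<lambda>i \<omega>. (\<lambda>b::bool. if b then 1 else 0 :: real) (X i \<omega>)) {1..}"
      by (rule P.indep_vars_compose2[OF assms(3)]) simp
    moreover have "Y = (\<lambda>i \<omega>. (\<lambda>b::bool. if b then 1 else 0 :: real) (X i \<omega>))" by (simp add: fun_eq_iff Y_def)
    ultimately have "P.indep_vars (\<lambda>_. borel) Y {1..}" by simp
    then show ?thesis by (rule P.indep_vars_subset) auto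
  qed
  have Sdef: "Ssum (\<lambda>t. X t \<omega>) n = (\<Sum>i\<in>{1..n}. Y i \<omega>)" for \<omega> n
    by (simp add: Ssum_def Y_def)
  have cr: "real c + real r > 0" using assms(7) by simp
  have tr: "trusts (real r) (real c) \<theta> \<longleftrightarrow> q \<le> \<theta>" for \<theta>
    unfolding trusts_def q_def using cr by (simp add: field_simps)
  have pm: "post_mean (real \<alpha>) (real \<beta>) (fst (fSF x t)) (snd (fSF x t))
      = (real \<alpha> + Ssum x t) / (real \<alpha> + real \<beta> + real t)" for x t
    by (simp add: post_mean_def fSF_def)
  define B where "B = {\<omega>\<in>space M. \<forall>t. q \<le> (real \<alpha> + (\<Sum>i\<in>{1..t}. Y i \<omega>)) / (real \<alpha> + real \<beta> + real t)}"
  have Qeq: "{\<omega> \<in> space M. quit_time (real \<alpha>) (real \<beta>) (real r) (real c) (\<lambda>t. X t \<omega>) < \<infinity>} = space M - B"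
    unfolding B_def quit_fin_iff tr pm Sdef by auto
  have Bmeas: "B \<in> sets M"
  proof -
    have "{\<omega>\<in>space M. q \<le> (real \<alpha> + (\<Sum>i\<in>{1..t}. Y i \<omega>)) / (real \<alpha> + real \<beta> + real t)} \<in> sets M" for t
    proof -
      have "(\<lambda>\<omega>. \<Sum>i\<in>{1..t}. Y i \<omega>) \<in> borel_measurable M"
        by (rule borel_measurable_sum) (use Ymeas in auto)
      then show ?thesis by measurable
    qed
    then have "(\<Inter>t. {\<omega>\<in>space M. q \<le> (real \<alpha> + (\<Sum>i\<in>{1..t}. Y i \<omega>)) / (real \<alpha> + real \<beta> + real t)}) \<in> sets M"
      by blast
    moreover have "B = (\<Inter>t. {\<omega>\<in>space M. q \<le> (real \<alpha> + (\<Sum>i\<in>{1..t}. Y i \<omega>)) / (real \<alpha> + real \<beta> + real t)})"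
      unfolding B_def by auto
    ultimately show ?thesis by simp
  qed
  have qp: "q - p > 0" using assms(11) q_def by simp
  have q0: "q \<ge> 0" unfolding q_def by simp
  have Bbound: "measure M B \<le> exp (-2 * ((q - p) * real n - real \<alpha>)\<^sup>2 / real n)"
    if n1: "n \<ge> 1" and na: "(q - p) * real n \<ge> real \<alpha>" for n
  proof -
    have "B \<subseteq> {\<omega>\<in>space M. (\<Sum>i\<in>{1..n}. Y i \<omega>) \<ge> real n * p + ((q - p) * real n - real \<alpha>)}"
    proof
      fix \<omega> assume "\<omega> \<in> B"
      then have sp: "\<omega> \<in> space M" and h: "q \<le> (real \<alpha> + (\<Sum>i\<in>{1..n}. Y i \<omega>)) / (real \<alpha> + real \<beta> + real n)"
        unfolding B_def by auto
      have pos: "real \<alpha> + real \<beta> + real n > 0" using assms(9) by simp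
      from h pos have "q * (real \<alpha> + real \<beta> + real n) \<le> real \<alpha> + (\<Sum>i\<in>{1..n}. Y i \<omega>)"
        by (simp add: field_simps)
      moreover have "q * real n \<le> q * (real \<alpha> + real \<beta> + real n)" using q0
        by (intro mult_left_mono) auto
      ultimately show "\<omega> \<in> {\<omega>\<in>space M. (\<Sum>i\<in>{1..n}. Y i \<omega>) \<ge> real n * p + ((q - p) * real n - real \<alpha>)}"
        using sp by (auto simp: algebra_simps)
    qed
    then have "measure M B \<le> measure M {\<omega>\<in>space M. (\<Sum>i\<in>{1..n}. Y i \<omega>) \<ge> real n * p + ((q - p) * real n - real \<alpha>)}"
    proof (rule P.finite_measure_mono)
      have "(\<lambda>\<omega>. \<Sum>i\<in>{1..n}. Y i \<omega>) \<in> borel_measurable M"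
        by (rule borel_measurable_sum) (use Ymeas in auto)
      then show "{\<omega>\<in>space M. (\<Sum>i\<in>{1..n}. Y i \<omega>) \<ge> real n * p + ((q - p) * real n - real \<alpha>)} \<in> sets M"
        by measurable
    qed
    also have "\<dots> \<le> exp (-2 * ((q - p) * real n - real \<alpha>)\<^sup>2 / real n)"
      by (rule P.hoeff_aux[OF ind]) (use n1 na ex in \<open>auto simp: Y_def\<close>)
    finally show ?thesis .
  qed
  have "measure M B \<le> 0"
  proof (rule LIMSEQ_le_const[OF lim_aux[OF qp, of "real \<alpha>"]])
    show "\<exists>N. \<forall>n\<ge>N. measure M B \<le> exp (-2 * ((q - p) * real n - real \<alpha>)\<^sup>2 / real n)"
    proof (intro exI allI impI)
      fix n assume "n \<ge> max 1 (nat \<lceil>real \<alpha> / (q - p)\<rceil>)"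
      then have n1: "n \<ge> 1" and n2: "real n \<ge> real \<alpha> / (q - p)" by (auto simp: nat_le_iff ceiling_le_iff)
      from n2 qp have "(q - p) * real n \<ge> real \<alpha>" by (simp add: field_simps)
      with n1 show "measure M B \<le> exp (-2 * ((q - p) * real n - real \<alpha>)\<^sup>2 / real n)" by (rule Bbound)
    qed
  qed
  then have "measure M B = 0" by (simp add: measure_le_0_iff)
  then show ?thesis unfolding Qeq using P.prob_compl[OF Bmeas] by simp
qed

end
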